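(* Let $n\ge 4$, $N=\{1,\dots,n\}$, fix distinct $i_1,i_2\in N$ and let $\hat N^c=N\setminus\{i_1,i_2\}$. Then the inequality $$\sum_{j\in\hat N^c}\left(x_{i_1j}+x_{ji_1}+x_{i_2j}\right)-x_{i_2i_1}-\sum_{j,j'\in\hat N^c:\,j\ne j'} x_{jj'}\le 3-\frac{(n-4)(n-5)}{2}$$ is a valid inequality for the weak order polytope $P^n_{WO}$, i.e. it holds for every point $x\in P^n_{WO}$.
   Context: Let $N=\{1,\dots,n\}$ and $A_N=\{(i,j): i,j\in N, i\ne j\}$. A weak order on $N$ is a binary relation $W\subseteq N\times N$ that is reflexive, transitive and total; $(i,j)\in W$ is read "$i$ is preferred over or tied with $j$". The characteristic vector of $W$ is $x^W\in\{0,1\}^{A_N}$ with $x^W_{(i,j)}=1$ if $(i,j)\in W$ and $0$ otherwise. The weak order polytope $P^n_{WO}$ is the convex hull of the characteristic vectors of all weak orders on $N$; its points are vectors $x\in\mathbb{R}^{A_N}$ and $x_{ij}$ denotes the coordinate $x_{(i,j)}$. *)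

theory Defs
  imports "HOL-Analysis.Analysis"
begin

text \<open>Ground set N is the finite type 'n (so n = CARD('n)). Points live in
  real^('n \<times> 'n); only the off-diagonal coordinates (the arcs A_N) are meaningful,
  the diagonal coordinates are identically 0 on the polytope.\<close>

definition weak_order :: "('n \<times> 'n) set \<Rightarrow> bool" where
  "weak_order W \<longleftrightarrow> refl W \<and> trans W \<and> total W"

definition char_vec :: "('n::finite \<times> 'n) set \<Rightarrow> real ^ ('n \<times> 'n)" where
  "char_vec W = (\<chi> a. if fst a \<noteq> snd a \<and> a \<in> W then 1 else 0)"

definition weak_order_polytope :: "(real ^ ('n::finite \<times> 'n)) set" where
  "weak_order_polytope = convex hull {char_vec W | W. weak_order W}"

end

theory Submission
  imports Defs
begin

definition offd :: "'a set \<Rightarrow> ('a \<times> 'a) set" where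
  "offd A = {(j, j'). j \<in> A \<and> j' \<in> A \<and> j \<noteq> j'}"

lemma card_offd: "finite A \<Longrightarrow> card (offd A) = card A * (card A - 1)"
proof -
  assume f: "finite A"
  have e: "offd A = A \<times> A - (\<lambda>x. (x,x)) ` A" unfolding offd_def by auto
  have "card (A \<times> A - (\<lambda>x. (x,x)) ` A) = card (A \<times> A) - card ((\<lambda>x. (x,x)) ` A)"
    by (rule card_Diff_subset) (use f in auto)
  also have "card ((\<lambda>x. (x,x)) ` A) = card A" by (rule card_image) (auto simp: inj_on_def)
  finally show ?thesis using e by (simp add: card_cartesian_product diff_mult_distrib2)
qed

lemma nat_tri: "real (a::nat) - real a * (real a - 1) / 2 \<le> 1"
proof (cases "a \<le> 1")
  case True then have "a = 0 \<or> a = 1" by auto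
  then show ?thesis by auto
next
  case False
  then have "(real a - 1) * (real a - 2) \<ge> 0" by auto
  then have "real a * real a - 3 * real a + 2 \<ge> 0" by (simp add: algebra_simps)
  then show ?thesis by (simp add: field_simps)
qed

lemma wo_ineq:
  fixes W :: "('n::finite \<times> 'n) set" and i1 i2 :: 'n
  assumes wo: "weak_order W" and n4: "CARD('n) \<ge> 4" and d: "i1 \<noteq> i2"
  defines "y \<equiv> \<lambda>p q. if p \<noteq> q \<and> (p,q) \<in> W then (1::real) else 0"
  shows "(\<Sum>j \<in> UNIV - {i1, i2}. y i1 j + y j i1 + y i2 j)
           - y i2 i1
           - (\<Sum>(j, j') \<in> {(j, j'). j \<in> UNIV - {i1, i2} \<and> j' \<in> UNIV - {i1, i2} \<and> j \<noteq> j'}. y j j')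
         \<le> 3 - (real CARD('n) - 4) * (real CARD('n) - 5) / 2"
proof -
  define C where "C = UNIV - {i1, i2}"
  define m where "m = card C"
  have mC: "m = CARD('n) - 2" unfolding m_def C_def using d by (simp add: card_Diff_subset)
  have tr: "\<And>a b c. (a,b) \<in> W \<Longrightarrow> (b,c) \<in> W \<Longrightarrow> (a,c) \<in> W"
    using wo unfolding weak_order_def by (meson transD)
  have tot: "\<And>a b. a \<noteq> b \<Longrightarrow> (a,b) \<in> W \<or> (b,a) \<in> W"
    using wo unfolding weak_order_def total_on_def by blast
  define T where "T = {j\<in>C. (i1,j)\<in>W \<and> (j,i1)\<in>W}"
  have TC: "T \<subseteq> C" unfolding T_def by auto
  have s1: "(\<Sum>j\<in>C. y i1 j + y j i1) = real m + real (card T)"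
  proof -
    have "(\<Sum>j\<in>C. y i1 j + y j i1) = (\<Sum>j\<in>C. 1 + (if j \<in> T then 1 else 0))"
    proof (rule sum.cong)
      fix j assume "j \<in> C"
      then have "j \<noteq> i1" unfolding C_def by auto
      then show "y i1 j + y j i1 = 1 + (if j \<in> T then 1 else 0)"
        using tot[of i1 j] \<open>j \<in> C\<close> unfolding y_def T_def by auto
    qed simp
    also have "\<dots> = real m + (\<Sum>j\<in>C. if j \<in> T then 1 else 0)"
      by (simp add: sum.distrib m_def)
    also have "(\<Sum>j\<in>C. if j \<in> T then 1 else (0::real)) = real (card T)"
      using TC by (simp add: sum.If_cases Int_absorb1 Int_commute)
    finally show ?thesis .
  qed
  define c where "c = y i2 i1"
  have s2: "(\<Sum>j\<in>C. y i2 j) \<le> real m - (if c = 0 \<and> T \<noteq> {} then 1 else 0)"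
  proof (cases "c = 0 \<and> T \<noteq> {}")
    case True
    then obtain t where t: "t \<in> T" by auto
    have "t \<in> C" using t TC by auto
    have "y i2 t = 0"
    proof (rule ccontr)
      assume "y i2 t \<noteq> 0"
      then have "(i2,t) \<in> W" unfolding y_def by (auto split: if_splits)
      moreover have "(t,i1) \<in> W" using t unfolding T_def by auto
      ultimately have "(i2,i1) \<in> W" using tr by blast
      then have "c = 1" unfolding c_def y_def using d by auto
      then show False using True by simp
    qed
    have "(\<Sum>j\<in>C. y i2 j) = y i2 t + (\<Sum>j\<in>C - {t}. y i2 j)"
      using \<open>t \<in> C\<close> by (simp add: sum.remove)
    also have "\<dots> \<le> 0 + (\<Sum>j\<in>C - {t}. 1)"
      using \<open>y i2 t = 0\<close> by (intro add_mono sum_mono) (auto simp: y_def)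
    also have "\<dots> = real m - 1"
    proof -
      have "0 < card C" using \<open>t \<in> C\<close> by (auto simp: card_gt_0_iff)
      then show ?thesis using \<open>t \<in> C\<close> by (simp add: m_def of_nat_diff)
    qed
    finally show ?thesis using True by simp
  next
    case False
    have "(\<Sum>j\<in>C. y i2 j) \<le> (\<Sum>j\<in>C. 1)" by (intro sum_mono) (auto simp: y_def)
    then show ?thesis using False by (auto simp: m_def)
  qed
  have c01: "c = 0 \<or> c = 1" unfolding c_def y_def by auto
  define P where "P = offd C"
  have swap: "(\<Sum>(j, j')\<in>P. y j j') = (\<Sum>(j, j')\<in>P. y j' j)"
    by (rule sum.reindex_bij_witness[where i="\<lambda>(a,b). (b,a)" and j="\<lambda>(a,b). (b,a)"])
       (auto simp: P_def offd_def)
  have s3: "2 * (\<Sum>(j, j')\<in>P. y j j') \<ge> real (card P) + real (card (offd T))"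
  proof -
    have "2 * (\<Sum>(j, j')\<in>P. y j j') = (\<Sum>(j, j')\<in>P. y j j' + y j' j)"
      using swap by (simp add: sum.distrib case_prod_beta)
    also have "\<dots> \<ge> (\<Sum>(j, j')\<in>P. 1 + (if (j,j') \<in> offd T then 1 else 0))"
    proof (rule sum_mono)
      fix p assume p: "p \<in> P"
      obtain j j' where pj: "p = (j,j')" by force
      have "j \<noteq> j'" using p pj unfolding P_def offd_def by auto
      show "(case p of (j, j') \<Rightarrow> 1 + (if (j, j') \<in> offd T then 1 else 0))
            \<le> (case p of (j, j') \<Rightarrow> y j j' + y j' j)"
      proof (cases "(j,j') \<in> offd T")
        case True
        then have "(j,i1) \<in> W" "(i1,j') \<in> W" "(j',i1) \<in> W" "(i1,j) \<in> W"
          unfolding offd_def T_def by auto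
        then have "(j,j') \<in> W" "(j',j) \<in> W" using tr by blast+
        then show ?thesis using True pj \<open>j \<noteq> j'\<close> unfolding y_def by auto
      next
        case False
        then show ?thesis using pj \<open>j \<noteq> j'\<close> tot[of j j'] unfolding y_def by auto
      qed
    qed
    also have "(\<Sum>(j, j')\<in>P. 1 + (if (j,j') \<in> offd T then 1 else (0::real)))
        = real (card P) + real (card (offd T))"
    proof -
      have sub: "offd T \<subseteq> P" using TC unfolding P_def offd_def by auto
      have "(\<Sum>(j, j')\<in>P. 1 + (if (j,j') \<in> offd T then 1 else (0::real)))
           = (\<Sum>p\<in>P. 1 + (if p \<in> offd T then 1 else (0::real)))"
        by (simp add: case_prod_beta)
      also have "\<dots> = real (card P) + (\<Sum>p\<in>P. if p \<in> offd T then 1 else (0::real))"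
        by (simp add: sum.distrib)
      also have "(\<Sum>p\<in>P. if p \<in> offd T then 1 else (0::real)) = real (card (offd T))"
        using sub by (simp add: sum.If_cases Int_absorb1 Int_commute)
      finally show ?thesis .
    qed
    finally show ?thesis .
  qed
  have cP: "card P = m * (m - 1)" unfolding P_def m_def by (simp add: card_offd)
  have cT: "card (offd T) = card T * (card T - 1)" by (simp add: card_offd)
  have Pe: "{(j, j'). j \<in> UNIV - {i1, i2} \<and> j' \<in> UNIV - {i1, i2} \<and> j \<noteq> j'} = P"
    unfolding P_def offd_def C_def by auto
  have split: "(\<Sum>j \<in> UNIV - {i1, i2}. y i1 j + y j i1 + y i2 j)
      = (\<Sum>j\<in>C. y i1 j + y j i1) + (\<Sum>j\<in>C. y i2 j)"
    unfolding C_def by (simp add: sum.distrib)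
  define a where "a = card T"
  have m2: "m \<ge> 2" using mC n4 by simp
  have rm: "real m * (real m - 1) = real (m * (m - 1))" using m2 by (simp add: of_nat_diff)
  have ra: "real (a * (a - 1)) = real a * (real a - 1)"
    by (cases a) (auto simp: algebra_simps)
  have nm: "real CARD('n) = real m + 2" using mC n4 by simp
  have tri: "real a - real a * (real a - 1) / 2 \<le> 1" by (rule nat_tri)
  have a0: "T = {} \<longleftrightarrow> a = 0" unfolding a_def using TC by simp
  have key: "real a + (real m - (if c = 0 \<and> T \<noteq> {} then 1 else 0)) - c
      - real a * (real a - 1) / 2 \<le> real m"
    using c01 tri a0 by auto
  define S where "S = (\<Sum>(j, j')\<in>P. y j j')"
  have Sge: "S \<ge> real m*(real m-1)/2 + real a*(real a-1)/2"
  proof -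
    have e1: "real (card P) = real m*(real m-1)" using cP rm by metis
    have e2: "real (card (offd T)) = real a*(real a-1)" using cT ra a_def by simp
    show ?thesis using s3 e1 e2 unfolding S_def by linarith
  qed
  have K: "3 - (real CARD('n) - 4) * (real CARD('n) - 5) / 2
     = 3 - (real m*(real m-1)/2 - 2*real m + 3)"
    unfolding nm by (simp add: field_simps)
  have "(\<Sum>j \<in> UNIV - {i1, i2}. y i1 j + y j i1 + y i2 j) - y i2 i1
     - (\<Sum>(j, j') \<in> {(j, j'). j \<in> UNIV - {i1, i2} \<and> j' \<in> UNIV - {i1, i2} \<and> j \<noteq> j'}. y j j')
     = real m + real a + (\<Sum>j\<in>C. y i2 j) - c - S"
    unfolding Pe split s1 c_def S_def a_def by simp
  then show ?thesis unfolding K using s2 key Sge by linarith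
qed

theorem mainTheorem5:
  fixes i1 i2 :: "'n::finite" and x :: "real ^ ('n \<times> 'n)"
  assumes "CARD('n) \<ge> 4"
    and "i1 \<noteq> i2"
    and "x \<in> weak_order_polytope"
  shows "(\<Sum>j \<in> UNIV - {i1, i2}. x $ (i1, j) + x $ (j, i1) + x $ (i2, j))
           - x $ (i2, i1)
           - (\<Sum>(j, j') \<in> {(j, j'). j \<in> UNIV - {i1, i2} \<and> j' \<in> UNIV - {i1, i2} \<and> j \<noteq> j'}. x $ (j, j'))
         \<le> 3 - (real CARD('n) - 4) * (real CARD('n) - 5) / 2"
proof -
  define L where "L = (\<lambda>x::real ^ ('n \<times> 'n). (\<Sum>j \<in> UNIV - {i1, i2}. x $ (i1, j) + x $ (j, i1) + x $ (i2, j))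
           - x $ (i2, i1)
           - (\<Sum>(j, j') \<in> {(j, j'). j \<in> UNIV - {i1, i2} \<and> j' \<in> UNIV - {i1, i2} \<and> j \<noteq> j'}. x $ (j, j')))"
  define K where "K = 3 - (real CARD('n) - 4) * (real CARD('n) - 5) / 2"
  have lin: "L (u *\<^sub>R a + v *\<^sub>R b) = u * L a + v * L b" for u v a b
    unfolding L_def
    by (simp add: sum.distrib sum_distrib_left case_prod_beta algebra_simps sum_subtractf)
  have cvx: "convex {z. L z \<le> K}"
  proof (rule convexI)
    fix a b :: "real ^ ('n \<times> 'n)" and u v :: real
    assume h: "a \<in> {z. L z \<le> K}" "b \<in> {z. L z \<le> K}" "0 \<le> u" "0 \<le> v" "u + v = 1"
    then have 1: "u * L a + v * L b \<le> u * K + v * K"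
      by (intro add_mono mult_left_mono) auto
    have 2: "u * K + v * K = K" using h by (simp add: distrib_right[symmetric])
    show "u *\<^sub>R a + v *\<^sub>R b \<in> {z. L z \<le> K}" using 1 2 by (simp add: lin)
  qed
  have sub: "{char_vec W | W. weak_order W} \<subseteq> {z. L z \<le> K}"
  proof
    fix z :: "real ^ ('n \<times> 'n)" assume "z \<in> {char_vec W | W. weak_order W}"
    then obtain W :: "('n \<times> 'n) set" where W: "weak_order W" "z = char_vec W" by auto
    have "L (char_vec W) \<le> K"
      using wo_ineq[OF W(1) assms(1,2)] unfolding L_def K_def char_vec_def by simp
    then show "z \<in> {z. L z \<le> K}" using W by simp
  qed
  have "weak_order_polytope \<subseteq> {z. L z \<le> K}"
    unfolding weak_order_polytope_def by (rule hull_minimal[where S=convex, OF sub cvx])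
  then show ?thesis using assms(3) unfolding L_def K_def by auto
qed

end
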